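(* For every even $n$ and integers $1\le k\le\frac n2$, $1\le i\le\frac n2$, $$\sum_{j=0}^{k}\binom{(n-2i)/2}{j}_{q^2}q^{2(k-j)^2-(k-j)+(n-1)j-1}\frac{(q^{n+2-4k+2j};q^2)_{2k-2j}}{(q;q)_{2k-2j}} =q^{2k^2-k-1}\sum_{r=0}^{2k}\binom{n-2i}{r}_q\,q^{(2k-r)(n-2i-r)}\frac{\prod_{j=i+r+1-2k}^{i}(1-q^{2j})}{\prod_{j=1}^{2k-r}(1-q^j)}$$ as an identity of rational functions in $q$.
   Context: $(x;t)_m=\prod_{j=0}^{m-1}(1-xt^j)$ and $\binom{c}{d}_t=\prod_{j=0}^{d-1}\frac{1-t^{c-j}}{1-t^{j+1}}$ (equal to $0$ if $d>c\ge0$). Products over empty ranges equal $1$. *)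

theory Defs
  imports Complex_Main
begin

definition qpoch :: "'a::field \<Rightarrow> 'a \<Rightarrow> nat \<Rightarrow> 'a" where
  "qpoch x t m = (\<Prod>j<m. 1 - x * t ^ j)"

definition qbinom :: "nat \<Rightarrow> nat \<Rightarrow> 'a::field \<Rightarrow> 'a" where
  "qbinom c d t = (if d > c then 0 else (\<Prod>j<d. (1 - t ^ (c - j)) / (1 - t ^ (j + 1))))"

end

theory Submission
  imports Defs
begin

fun gb :: "nat \<Rightarrow> nat \<Rightarrow> 'a::comm_ring_1 \<Rightarrow> 'a" where
  "gb N 0 t = 1"
| "gb 0 (Suc r) t = 0"
| "gb (Suc N) (Suc r) t = gb N r t + t^Suc r * gb N (Suc r) t"

lemma gb_zero: "N < r \<Longrightarrow> gb N r t = 0"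
proof (induction N arbitrary: r)
  case 0 then show ?case by (cases r) auto
next
  case (Suc N) then show ?case by (cases r) auto
qed

lemma gb_diag: "gb N N t = 1"
  by (induction N) (auto simp: gb_zero)

definition qp :: "'a::comm_ring_1 \<Rightarrow> nat \<Rightarrow> 'a" where
  "qp t N = (\<Prod>l=1..N. 1 - t^l)"

lemma qp_0[simp]: "qp t 0 = 1" by (simp add: qp_def)
lemma qp_Suc: "qp t (Suc N) = qp t N * (1 - t^Suc N)"
  by (simp add: qp_def)

lemma gb_fact: "r \<le> N \<Longrightarrow> gb N r t * qp t r * qp t (N-r) = qp t N"
proof (induction N arbitrary: r)
  case 0 then show ?case by simp
next
  case (Suc N)
  show ?case
  proof (cases r)
    case 0 then show ?thesis by simp
  next
    case (Suc s)
    have h1: "gb N s t * qp t s * qp t (N-s) = qp t N" using Suc.IH Suc.prems \<open>r = Suc s\<close> by simp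
    show ?thesis
    proof (cases "s = N")
      case True
      then show ?thesis using h1 \<open>r = Suc s\<close> by (simp add: gb_zero gb_diag qp_Suc)
    next
      case False
      then obtain d where dN: "N = Suc s + d" using Suc.prems \<open>r = Suc s\<close>
        by (metis Suc_le_mono le_Suc_ex le_neq_implies_less Suc_leI)
      have h2: "gb N (Suc s) t * qp t (Suc s) * qp t d = qp t N" using Suc.IH[of "Suc s"] dN by simp
      have h1': "gb N s t * qp t s * qp t d * (1 - t^Suc d) = qp t N" using h1 dN by (simp add: qp_Suc mult.assoc)
      have "gb (Suc N) r t * qp t r * qp t (Suc N - r)
          = (gb N s t + t^Suc s * gb N (Suc s) t) * (qp t s * (1 - t^Suc s)) * (qp t d * (1 - t^Suc d))"
        using \<open>r = Suc s\<close> dN by (simp add: qp_Suc)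
      also have "\<dots> = (gb N s t * qp t s * qp t d * (1 - t^Suc d)) * (1 - t^Suc s)
            + t^Suc s * (1 - t^Suc d) * (gb N (Suc s) t * qp t (Suc s) * qp t d)"
        by (simp add: qp_Suc algebra_simps)
      also have "\<dots> = qp t N * (1 - t^Suc s) + t^Suc s * (1 - t^Suc d) * qp t N"
        by (simp only: h1' h2)
      also have "\<dots> = qp t N * ((1 - t^Suc s) + t^Suc s * (1 - t^Suc d))"
        by (simp add: algebra_simps)
      also have "t^Suc s * t^Suc d = t^Suc N"
        using dN by (simp add: power_add algebra_simps)
      then have "(1 - t^Suc s) + t^Suc s * (1 - t^Suc d) = 1 - t^Suc N"
        by (simp add: algebra_simps)
      finally show ?thesis by (simp add: qp_Suc)
    qed
  qed
qed

lemma gb_R2: "gb (Suc N) (Suc r) t = t^(N-r) * gb N r t + gb N (Suc r) t"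
proof (induction N arbitrary: r)
  case 0 then show ?case by (cases r) auto
next
  case (Suc N)
  show ?case
  proof (cases r)
    case 0
    have "gb (Suc N) 1 t = t^N + gb N 1 t" using Suc.IH[of 0] by simp
    then show ?thesis using 0 by (simp add: algebra_simps)
  next
    case (Suc s)
    have i1: "gb (Suc N) (Suc s) t = t^(N-s) * gb N s t + gb N (Suc s) t" using Suc.IH .
    have i2: "gb (Suc N) (Suc (Suc s)) t = t^(N-Suc s) * gb N (Suc s) t + gb N (Suc (Suc s)) t" using Suc.IH .
    have L: "gb (Suc (Suc N)) (Suc r) t = gb (Suc N) (Suc s) t + t^Suc (Suc s) * gb (Suc N) (Suc (Suc s)) t"
      using \<open>r = Suc s\<close> by simp
    have R: "t ^ (Suc N - r) * gb (Suc N) r t + gb (Suc N) (Suc r) t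
       = t^(N-s) * (gb N s t + t^Suc s * gb N (Suc s) t) + (gb N (Suc s) t + t^Suc (Suc s) * gb N (Suc (Suc s)) t)"
      using \<open>r = Suc s\<close> by simp
    show ?thesis
    proof (cases "s < N")
      case True
      then obtain d where dN: "N = Suc s + d" by (metis less_imp_Suc_add add_Suc)
      show ?thesis unfolding L R i1 i2 using dN by (simp add: algebra_simps power_add)
    next
      case False
      then have z: "gb N (Suc s) t = 0" "gb N (Suc (Suc s)) t = 0" by (auto simp: gb_zero)
      show ?thesis unfolding L R i1 i2 using z by simp
    qed
  qed
qed

lemma elim2:
  fixes G X Y x y :: "'a::comm_ring_1"
  assumes h2: "G = X + x*Y" and h: "G = y*X + Y"
  shows "(1-x)*G = (1-x*y)*X"
proof -
  have "(1-x)*G = G - x*G" by (simp add: algebra_simps)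
  also have "\<dots> = (X + x*Y) - x*(y*X + Y)"
    by (subst (2) h, subst h2, rule refl)
  also have "\<dots> = (1-x*y)*X" by (simp add: algebra_simps)
  finally show ?thesis .
qed

lemma gb_A1: "r \<le> a \<Longrightarrow> (1 - t^Suc r) * gb (Suc a) (Suc r) t = (1 - t^Suc a) * gb a r t"
proof -
  assume ra: "r \<le> a"
  have e1: "gb (Suc a) (Suc r) t = gb a r t + t^Suc r * gb a (Suc r) t" by simp
  have e2: "gb (Suc a) (Suc r) t = t^(a-r) * gb a r t + gb a (Suc r) t" by (rule gb_R2)
  have "Suc r + (a-r) = Suc a" using ra by simp
  then have p: "t^Suc r * t^(a-r) = t^Suc a" by (metis power_add)
  show ?thesis using elim2[OF e1 e2] p by simp
qed

lemma gb_A2: "s \<le> a \<Longrightarrow> (1 - t^(a-s)) * gb (Suc a) (Suc s) t = (1 - t^Suc a) * gb a (Suc s) t"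
proof -
  assume ra: "s \<le> a"
  have e1: "gb (Suc a) (Suc s) t = gb a (Suc s) t + t^(a-s) * gb a s t" using gb_R2[of a s t] by (simp add: algebra_simps)
  have e2: "gb (Suc a) (Suc s) t = t^Suc s * gb a (Suc s) t + gb a s t" by (simp add: algebra_simps)
  have "(a-s) + Suc s = Suc a" using ra by simp
  then have p: "t^(a-s) * t^Suc s = t^Suc a" by (metis power_add)
  show ?thesis using elim2[OF e1 e2] p by simp
qed

lemma gb_ratio: "(1 - t^Suc r) * gb a (Suc r) t = (1 - t^(a-r)) * gb a r t"
proof (cases "r < a")
  case True
  then obtain b where b: "a = Suc b" by (cases a) auto
  have rb: "r \<le> b" using True b by simp
  show ?thesis
  proof (cases r)
    case 0
    then show ?thesis using gb_A1[OF rb, of t] b by simp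
  next
    case (Suc s)
    have "s \<le> b" using rb Suc by simp
    then show ?thesis using gb_A1[OF rb, of t] gb_A2[of s b t] b Suc by simp
  qed
next
  case False
  then show ?thesis by (cases "r = a") (auto simp: gb_zero)
qed

definition B :: "nat \<Rightarrow> int \<Rightarrow> 'a::comm_ring_1 \<Rightarrow> 'a" where
  "B N r t = (if r < 0 then 0 else gb N (nat r) t)"

lemma B_neg[simp]: "r < 0 \<Longrightarrow> B N r t = 0" by (simp add: B_def)
lemma B_big: "int N < r \<Longrightarrow> B N r t = 0" by (simp add: B_def gb_zero)
lemma B_0[simp]: "B N 0 t = 1" by (simp add: B_def)
lemma B_nat[simp]: "B N (int r) t = gb N r t" by (simp add: B_def)

lemma B_R1: "B (Suc N) r (t::'a::field) = B N (r-1) t + t powi r * B N r t"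
proof (cases "r < 1")
  case True
  then consider "r < 0" | "r = 0" by linarith
  then show ?thesis by cases simp_all
next
  case False
  define s where "s = nat (r - 1)"
  have nr: "nat r = Suc s" and r1: "r - 1 = int s" and pr: "t powi r = t ^ Suc s" and rn: "\<not> r < 0"
    using False by (simp_all add: s_def power_int_def nat_diff_distrib')
  have b: "\<And>M. B M r t = gb M (Suc s) t" using nr rn by (simp add: B_def)
  show ?thesis unfolding b r1 pr by simp
qed

lemma B_R2: "B (Suc N) r (t::'a::field) = t powi (int N + 1 - r) * B N (r-1) t + B N r t"
proof (cases "r < 1")
  case True
  then consider "r < 0" | "r = 0" by linarith
  then show ?thesis by cases simp_all
next
  case False
  define s where "s = nat (r - 1)"
  have nr: "nat r = Suc s" and r1: "r - 1 = int s" and rn: "\<not> r < 0"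
    using False by (simp_all add: s_def nat_diff_distrib')
  have b: "\<And>M. B M r t = gb M (Suc s) t" using nr rn by (simp add: B_def)
  show ?thesis
  proof (cases "s \<le> N")
    case True
    then have "int N + 1 - r = int (N - s)" using r1 by simp
    then show ?thesis unfolding b r1 using gb_R2[of N s t] by simp
  next
    case False
    then show ?thesis unfolding b r1 by (simp add: gb_zero)
  qed
qed

lemma B_R22: assumes "(q::'a::field) \<noteq> 0"
  shows "B (Suc (Suc N)) r q = B N r q + (q powi (int N + 1 - r) + q powi (int N + 2 - r)) * B N (r-1) q
     + q powi (2*(int N + 2 - r)) * B N (r-2) q"
proof -
  have e0: "int (Suc N) + 1 - r = int N + 2 - r" by simp
  have e1: "int N + 1 - (r - 1) = int N + 2 - r" by simp
  have "B (Suc (Suc N)) r q = q powi (int N + 2 - r) * B (Suc N) (r-1) q + B (Suc N) r q"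
    using B_R2[of "Suc N" r q] unfolding e0 .
  also have "B (Suc N) (r-1) q = q powi (int N + 2 - r) * B N (r-2) q + B N (r-1) q"
    using B_R2[of N "r-1" q] unfolding e1 by (simp add: algebra_simps)
  also have "B (Suc N) r q = q powi (int N + 1 - r) * B N (r-1) q + B N r q"
    using B_R2[of N r q] .
  finally have *: "B (Suc (Suc N)) r q = q powi (int N + 2 - r) * (q powi (int N + 2 - r) * B N (r-2) q + B N (r-1) q)
      + (q powi (int N + 1 - r) * B N (r-1) q + B N r q)" .
  have p: "q powi (2*(int N + 2 - r)) = q powi (int N + 2 - r) * q powi (int N + 2 - r)"
    using assms power_int_add[of q "int N + 2 - r" "int N + 2 - r"] unfolding mult_2 by blast
  show ?thesis unfolding * p by (simp add: algebra_simps)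
qed

definition pm :: "'a::comm_ring_1 \<Rightarrow> int \<Rightarrow> 'a" where
  "pm q t = (\<Prod>l=1..nat t. 1 + q^l)"

definition cc :: "nat \<Rightarrow> int \<Rightarrow> 'a::field \<Rightarrow> 'a" where
  "cc a t q = B a t (q^2) * pm q t"

lemma cc_neg[simp]: "t < 0 \<Longrightarrow> cc a t q = 0" by (simp add: cc_def)
lemma cc_0[simp]: "cc a 0 q = 1" by (simp add: cc_def pm_def)
lemma cc_big: "int a < t \<Longrightarrow> cc a t q = 0" by (simp add: cc_def B_big)

lemma pm_step: "t \<ge> 1 \<Longrightarrow> pm q t = (1 + q powi t) * pm q (t-1)"
proof -
  assume "t \<ge> 1"
  define s where "s = nat (t-1)"
  have s: "t = int (Suc s)" using \<open>t \<ge> 1\<close> by (simp add: s_def)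
  have n1: "nat t = Suc s" "nat (t-1) = s" using s by simp_all
  have pt: "q powi t = q^Suc s" unfolding s by (rule power_int_of_nat)
  have "pm q t = (\<Prod>l=1..Suc s. 1 + q^l)" by (simp add: pm_def n1)
  also have "\<dots> = (1 + q^Suc s) * (\<Prod>l=1..s. 1 + q^l)" by (simp add: algebra_simps)
  finally show ?thesis by (simp add: pm_def n1 pt)
qed

lemma cc_P: "cc (Suc a) t q = q powi (2*t) * cc a t q + (1 + q powi t) * cc a (t-1) q"
proof (cases "t \<ge> 1")
  case True
  have "(q^2) powi t = q powi (2*t)" by (simp add: power_int_mult)
  then show ?thesis using True B_R1[of a t "q^2"] pm_step[OF True, of q]
    by (simp add: cc_def algebra_simps)
next
  case False
  then consider "t < 0" | "t = 0" by linarith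
  then show ?thesis by cases simp_all
qed

lemma cc_ratio: "(1 - q powi (t+1)) * cc a (t+1) q = (1 - q powi (2*(int a - t))) * cc a t q"
proof (cases "t < 0")
  case True
  then consider "t = -1" | "t < -1" by linarith
  then show ?thesis by cases simp_all
next
  case False
  then obtain s where s: "t = int s" by (metis nonneg_int_cases not_less)
  show ?thesis
  proof (cases "s < a")
    case True
    have g: "(1 - (q^2)^Suc s) * gb a (Suc s) (q^2) = (1 - (q^2)^(a-s)) * gb a s (q^2)" by (rule gb_ratio)
    have pm1: "pm q (int (Suc s)) = (1 + q^Suc s) * pm q (int s)"
      unfolding pm_def nat_int by (simp add: algebra_simps)
    have ts: "t + 1 = int (Suc s)" using s by simp
    have "2*(int a - t) = int (2*(a-s))" using s True by simp
    then have e2: "q powi (2*(int a - t)) = (q^2)^(a-s)" by (metis power_int_of_nat power_mult)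
    have L: "(1 - q powi (t+1)) * cc a (t+1) q = (1 - q^Suc s) * (gb a (Suc s) (q^2) * ((1 + q^Suc s) * pm q (int s)))"
      unfolding cc_def ts power_int_of_nat B_nat pm1 ..
    have R: "(1 - q powi (2*(int a - t))) * cc a t q = (1 - (q^2)^(a-s)) * (gb a s (q^2) * pm q (int s))"
      unfolding cc_def e2 unfolding s B_nat ..
    have "(1 - q^Suc s) * (gb a (Suc s) (q^2) * ((1 + q^Suc s) * pm q (int s)))
       = ((1 - (q^2)^Suc s) * gb a (Suc s) (q^2)) * pm q (int s)"
      by (simp only: power2_eq_square power_mult_distrib) (simp add: algebra_simps)
    also have "\<dots> = (1 - (q^2)^(a-s)) * (gb a s (q^2) * pm q (int s))" using g by simp
    finally show ?thesis using L R by simp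
  next
    case False
    then have "int a < t + 1" using s by simp
    then have z: "cc a (t+1) q = 0" by (rule cc_big)
    show ?thesis
    proof (cases "s = a")
      case True then show ?thesis using z s by simp
    next
      case False
      then have "cc a t q = 0" using \<open>\<not> s < a\<close> s by (intro cc_big) simp
      then show ?thesis using z by simp
    qed
  qed
qed

lemma powi_split: "(q::'a::field) \<noteq> 0 \<Longrightarrow> x = y1 + y2 \<Longrightarrow> q powi x = q powi y1 * q powi y2"
  by (simp add: power_int_add)

lemma powi_eq: "(q::'a::field) \<noteq> 0 \<Longrightarrow> x1 + x2 = y1 + y2 \<Longrightarrow> q powi x1 * q powi x2 = q powi y1 * q powi y2"
  by (metis power_int_add)

lemma sum_shift1:
  fixes f :: "int \<Rightarrow> 'a::comm_ring_1"
  assumes "f 0 = 0" "f (K+1) = 0"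
  shows "(\<Sum>t\<in>{0..K}. f t) = (\<Sum>t\<in>{0..K}. f (t+1))"
proof (cases "K < 0")
  case True then show ?thesis by simp
next
  case False
  have "(\<Sum>t\<in>{0..K}. f (t+1)) = sum f ((\<lambda>t. t+1) ` {0..K})"
    by (subst sum.reindex) (auto simp: inj_on_def)
  also have "(\<lambda>t. t+1) ` {0..K} = {1..K+1}"
    by (auto simp: image_iff intro!: bexI[where x="_ - 1"])
  also have "{0..K+1} = insert 0 {1..K+1}" using False by auto
  then have "sum f {0..K+1} = sum f {1..K+1}" using assms by simp
  then have "sum f {1..K+1} = sum f {0..K+1}" ..
  also have "{0..K+1} = insert (K+1) {0..K}" using False by auto
  then have "sum f {0..K+1} = sum f {0..K}" using assms by simp
  finally show ?thesis ..
qed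

definition S :: "nat \<Rightarrow> nat \<Rightarrow> int \<Rightarrow> 'a::field \<Rightarrow> 'a" where
  "S a m K q = (\<Sum>t\<in>{0..K}. B (2*m) (K-t) q * q powi (t*(2*int m - K + t)) * cc a t q)"

definition T :: "nat \<Rightarrow> nat \<Rightarrow> int \<Rightarrow> 'a::field \<Rightarrow> 'a" where
  "T a m K q = (\<Sum>j\<le>m. gb m j (q^2) * cc (m+a-j) (K - 2*int j) q * q powi (2*int j*(int m + int a + int j - K)))"

lemma T_rec:
  assumes q: "(q::'a::field) \<noteq> 0"
  shows "T a (Suc m) K q = T (Suc a) m K q + q powi (2*(2*int m + int a + 2 - K)) * T a m (K-2) q"
proof -
  define w where "w = q powi (2*(2*int m + int a + 2 - K))"
  define f where "f = (\<lambda>j. gb m j (q^2) * cc (m + Suc a - j) (K - 2*int j) q * q powi (2*int j*(int m + int (Suc a) + int j - K)))"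
  define g where "g = (\<lambda>i. w * (gb m i (q^2) * cc (m+a-i) ((K-2) - 2*int i) q * q powi (2*int i*(int m + int a + int i - (K-2)))))"
  have "T a (Suc m) K q = (\<Sum>j\<le>Suc m. gb (Suc m) j (q^2) * cc (Suc m+a-j) (K - 2*int j) q * q powi (2*int j*(int (Suc m) + int a + int j - K)))"
    by (simp add: T_def)
  also have "\<dots> = f 0 + (\<Sum>i\<le>m. gb (Suc m) (Suc i) (q^2) * cc (Suc m+a-Suc i) (K - 2*int (Suc i)) q * q powi (2*int (Suc i)*(int (Suc m) + int a + int (Suc i) - K)))"
    by (subst sum.atMost_Suc_shift) (simp add: f_def)
  also have "\<dots> = f 0 + (\<Sum>i\<le>m. f (Suc i) + g i)"
  proof -
    have "gb (Suc m) (Suc i) (q^2) * cc (Suc m+a-Suc i) (K - 2*int (Suc i)) q * q powi (2*int (Suc i)*(int (Suc m) + int a + int (Suc i) - K))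
        = f (Suc i) + g i" if "i \<le> m" for i
    proof -
      have c1: "Suc m + a - Suc i = m + a - i" "m + Suc a - Suc i = m + a - i" using that by simp_all
      have c2: "K - 2*int (Suc i) = (K-2) - 2*int i" by simp
      have e1: "2*int (Suc i)*(int (Suc m) + int a + int (Suc i) - K) = 2*int (Suc i)*(int m + int (Suc a) + int (Suc i) - K)" by simp
      have e2: "q powi (2*int (Suc i)*(int (Suc m) + int a + int (Suc i) - K)) * (q^2)^(m-i)
          = w * q powi (2*int i*(int m + int a + int i - (K-2)))"
      proof -
        have "(q^2)^(m-i) = q powi (2*(int m - int i))" using that
          by (metis of_nat_diff power_int_of_nat power_mult of_nat_mult of_nat_numeral)
        moreover have "q powi (2*int (Suc i)*(int (Suc m) + int a + int (Suc i) - K)) * q powi (2*(int m - int i))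
            = q powi (2*(2*int m + int a + 2 - K)) * q powi (2*int i*(int m + int a + int i - (K-2)))"
          by (rule powi_eq[OF q]) (simp add: algebra_simps)
        ultimately show ?thesis by (simp add: w_def)
      qed
      show ?thesis unfolding gb_R2 f_def g_def c1 c2 e1
        using e2 by (simp add: algebra_simps)
    qed
    then show ?thesis by simp
  qed
  also have "\<dots> = (f 0 + (\<Sum>i\<le>m. f (Suc i))) + (\<Sum>i\<le>m. g i)" by (simp add: sum.distrib)
  also have "f 0 + (\<Sum>i\<le>m. f (Suc i)) = (\<Sum>j\<le>Suc m. f j)" by (rule sum.atMost_Suc_shift[symmetric])
  also have "\<dots> = (\<Sum>j\<le>m. f j)" by (simp add: f_def gb_zero)
  also have "(\<Sum>j\<le>m. f j) = T (Suc a) m K q" by (simp add: T_def f_def)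
  also have "(\<Sum>i\<le>m. g i) = w * T a m (K-2) q" by (simp add: T_def g_def sum_distrib_left)
  finally show ?thesis by (simp add: w_def)
qed

lemma S_rec:
  assumes q: "(q::'a::field) \<noteq> 0"
  shows "S a (Suc m) K q = S (Suc a) m K q + q powi (2*(2*int m + int a + 2 - K)) * S a m (K-2) q"
proof -
  define N where "N = 2*m"
  define Ni where "Ni = 2 * int m"
  have NNi: "int N = Ni" by (simp add: N_def Ni_def)
  define w where "w = q powi (2*(2*int m + int a + 2 - K))"
  define E where "E = (\<lambda>t. q powi (t*(Ni+2-K+t)) * cc a t q)"
  define P1 where "P1 = (\<lambda>t. B N (K-t) q * E t)"
  define P2 where "P2 = (\<lambda>t. (q powi (Ni+1-(K-t)) + q powi (Ni+2-(K-t))) * B N (K-t-1) q * E t)"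
  define P3 where "P3 = (\<lambda>t. q powi (2*(Ni+2-(K-t))) * B N (K-t-2) q * E t)"
  define Q1 where "Q1 = (\<lambda>t. B N (K-t) q * q powi (t*(Ni-K+t)) * (q powi (2*t) * cc a t q))"
  define Q2 where "Q2 = (\<lambda>t. B N (K-t) q * q powi (t*(Ni-K+t)) * ((1 + q powi t) * cc a (t-1) q))"
  define R where "R = (\<lambda>t. w * (B N (K-2-t) q * q powi (t*(Ni-(K-2)+t)) * cc a t q))"
  define D where "D = (\<lambda>t. P2 t - Q2 (t+1))"
  have SL: "S a (Suc m) K q = (\<Sum>t\<in>{0..K}. P1 t + P2 t + P3 t)"
  proof -
    have "2 * Suc m = Suc (Suc N)" by (simp add: N_def)
    moreover have "2 * int (Suc m) = Ni + 2" by (simp add: Ni_def)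
    ultimately show ?thesis unfolding S_def P1_def P2_def P3_def E_def
      by (intro sum.cong refl) (simp add: B_R22[OF q] NNi algebra_simps)
  qed
  have SR1: "S (Suc a) m K q = (\<Sum>t\<in>{0..K}. Q1 t) + (\<Sum>t\<in>{0..K}. Q2 t)"
    unfolding S_def Q1_def Q2_def sum.distrib[symmetric] N_def[symmetric] Ni_def[symmetric]
    by (intro sum.cong refl) (simp add: cc_P algebra_simps)
  have SR2: "w * S a m (K-2) q = (\<Sum>t\<in>{0..K}. R t)"
  proof -
    have "w * S a m (K-2) q = (\<Sum>t\<in>{0..K-2}. R t)"
      unfolding S_def R_def sum_distrib_left N_def[symmetric] Ni_def[symmetric] by (simp add: algebra_simps)
    also have "\<dots> = (\<Sum>t\<in>{0..K}. R t)"
      by (rule sum.mono_neutral_left) (auto simp: R_def)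
    finally show ?thesis .
  qed
  have h1: "P1 t = Q1 t" for t
  proof -
    have "q powi (t*(Ni+2-K+t)) = q powi (t*(Ni-K+t)) * q powi (2*t)"
      by (rule powi_split[OF q]) (simp add: algebra_simps)
    then show ?thesis by (simp add: P1_def Q1_def E_def algebra_simps)
  qed
  have Q2s: "(\<Sum>t\<in>{0..K}. Q2 t) = (\<Sum>t\<in>{0..K}. Q2 (t+1))"
    by (rule sum_shift1) (simp_all add: Q2_def)
  have Dform: "D t = B N (K-t-1) q * q powi ((t+1)*(Ni-K+t+1)) * (q powi t - 1) * cc a t q" for t
  proof -
    define E' where "E' = (t+1)*(Ni-K+t+1)"
    have a1: "q powi (Ni+1-(K-t)) * q powi (t*(Ni+2-K+t)) = q powi E' * q powi t"
      by (rule powi_eq[OF q]) (simp add: E'_def algebra_simps)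
    have a2: "q powi (Ni+2-(K-t)) * q powi (t*(Ni+2-K+t)) = q powi E' * q powi (t+1)"
      by (rule powi_eq[OF q]) (simp add: E'_def algebra_simps)
    have a3: "(t+1)*(Ni-K+(t+1)) = E'" by (simp add: E'_def algebra_simps)
    have k1: "K - (t+1) = K - t - 1" by simp
    have "D t = B N (K-t-1) q * cc a t q * ((q powi (Ni+1-(K-t)) * q powi (t*(Ni+2-K+t)) + q powi (Ni+2-(K-t)) * q powi (t*(Ni+2-K+t)))
          - q powi E' * (1 + q powi (t+1)))"
      unfolding D_def P2_def Q2_def E_def k1 a3 by (simp add: algebra_simps)
    also have "\<dots> = B N (K-t-1) q * cc a t q * (q powi E' * (q powi t - 1))"
      unfolding a1 a2 by (simp add: algebra_simps)
    finally show ?thesis by (simp add: E'_def algebra_simps)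
  qed
  have Ds: "(\<Sum>t\<in>{0..K}. D t) = (\<Sum>t\<in>{0..K}. D (t+1))"
    by (rule sum_shift1) (simp_all add: Dform)
  have h3: "D (t+1) + P3 t = R t" for t
  proof -
    define F where "F = t*(Ni+2-K+t) + 2*(Ni+2-K)"
    have r: "(q powi (t+1) - 1) * cc a (t+1) q = - ((1 - q powi (2*(int a - t))) * cc a t q)"
      using cc_ratio[of q t a] by (simp add: algebra_simps)
    have k: "K - (t+1) - 1 = K - t - 2" "K-2-t = K-t-2" by simp_all
    have b1: "q powi ((t+1+1)*(Ni-K+(t+1)+1)) = q powi F * q powi (2*t)"
      by (rule powi_split[OF q]) (simp add: F_def algebra_simps)
    have b2: "q powi (2*(Ni+2-(K-t))) * q powi (t*(Ni+2-K+t)) = q powi F * q powi (2*t)"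
      by (rule powi_eq[OF q]) (simp add: F_def algebra_simps)
    have b3: "w * q powi (t*(Ni-(K-2)+t)) = q powi F * q powi (2*int a)"
      unfolding w_def by (rule powi_eq[OF q]) (simp add: F_def Ni_def algebra_simps)
    have b4: "q powi (2*t) * q powi (2*(int a - t)) = q powi (2*int a)"
      using powi_eq[OF q, of "2*t" "2*(int a - t)" "2*int a" 0] by simp
    have "D (t+1) = B N (K-t-2) q * q powi ((t+1+1)*(Ni-K+(t+1)+1)) * ((q powi (t+1) - 1) * cc a (t+1) q)"
      unfolding Dform k by (simp add: algebra_simps)
    also have "\<dots> = - (B N (K-t-2) q * (q powi F * q powi (2*t)) * ((1 - q powi (2*(int a - t))) * cc a t q))"
      unfolding r b1 by simp
    also have "\<dots> = - (B N (K-t-2) q * cc a t q * (q powi F * q powi (2*t) - q powi F * q powi (2*int a)))"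
    proof -
      have b5: "q powi F * q powi (2*t) * (1 - q powi (2*(int a - t))) = q powi F * q powi (2*t) - q powi F * q powi (2*int a)"
        unfolding b4[symmetric] by (simp add: algebra_simps)
      show ?thesis by (simp only: b5[symmetric]) (simp add: algebra_simps)
    qed
    finally have d: "D (t+1) = - (B N (K-t-2) q * cc a t q * (q powi F * q powi (2*t) - q powi F * q powi (2*int a)))" .
    have p3: "P3 t = B N (K-t-2) q * cc a t q * (q powi F * q powi (2*t))"
      unfolding P3_def E_def b2[symmetric] by (simp add: algebra_simps)
    have rr: "R t = B N (K-t-2) q * cc a t q * (q powi F * q powi (2*int a))"
      unfolding R_def k b3[symmetric] by (simp add: algebra_simps)
    show ?thesis unfolding d p3 rr by (simp add: algebra_simps)
  qed
  have "(\<Sum>t\<in>{0..K}. P1 t + P2 t + P3 t) = (\<Sum>t\<in>{0..K}. Q1 t) + (\<Sum>t\<in>{0..K}. D t) + (\<Sum>t\<in>{0..K}. Q2 (t+1)) + (\<Sum>t\<in>{0..K}. P3 t)"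
    by (simp add: sum.distrib h1 D_def sum_subtractf)
  also have "\<dots> = (\<Sum>t\<in>{0..K}. Q1 t) + (\<Sum>t\<in>{0..K}. Q2 t) + (\<Sum>t\<in>{0..K}. D (t+1) + P3 t)"
    unfolding Ds Q2s by (simp add: sum.distrib)
  also have "\<dots> = S (Suc a) m K q + w * S a m (K-2) q"
    unfolding SR1 SR2 h3 by simp
  finally show ?thesis unfolding SL w_def .
qed

lemma B_0N: "B 0 r t = (if r = 0 then 1 else 0)"
  by (cases "r < 0") (auto simp: B_def gb_zero)

lemma ST_0: "S a 0 K q = T a 0 K q"
proof -
  have "S a 0 K q = (\<Sum>t\<in>{0..K}. if t = K then cc a K q else 0)"
    unfolding S_def by (intro sum.cong refl) (auto simp: B_0N)
  also have "\<dots> = cc a K q" by (cases "K < 0") auto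
  finally show ?thesis by (simp add: T_def)
qed

lemma ST: "(q::'a::field) \<noteq> 0 \<Longrightarrow> S a m K q = T a m K q"
proof (induction m arbitrary: a K)
  case 0 show ?case by (rule ST_0)
next
  case (Suc m)
  then show ?case by (simp add: S_rec T_rec)
qed

lemma qp_split: "qp t (A + r) = qp t A * (\<Prod>l<r. 1 - t^(A+1+l))"
  by (induction r) (simp_all add: qp_Suc)

lemma qp_nz: "(\<forall>l\<in>{1..N}. (t::'a::field)^l \<noteq> 1) \<Longrightarrow> qp t N \<noteq> 0"
  by (auto simp: qp_def)

lemma qp_sq: "qp (q^2) r = qp q r * pm q (int r)"
proof (induction r)
  case 0 then show ?case by (simp add: pm_def)
next
  case (Suc r)
  have "pm q (int (Suc r)) = (1 + q^Suc r) * pm q (int r)"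
    unfolding pm_def nat_int by (simp add: algebra_simps)
  moreover have "(q^2)^Suc r = q^Suc r * q^Suc r"
    by (simp only: power2_eq_square power_mult_distrib)
  ultimately show ?case using Suc by (simp add: qp_Suc algebra_simps)
qed

lemma qbinom_gb:
  assumes "\<forall>l\<in>{1..c}. (t::'a::field)^l \<noteq> 1"
  shows "qbinom c d t = gb c d t"
proof (cases "c < d")
  case True then show ?thesis by (simp add: qbinom_def gb_zero)
next
  case False
  then obtain e where c: "c = e + d" by (metis add.commute le_add_diff_inverse not_less)
  have nz1: "qp t d \<noteq> 0" using assms c by (intro qp_nz) auto
  have nz2: "qp t e \<noteq> 0" using assms c by (intro qp_nz) auto
  have num: "(\<Prod>j<d. 1 - t^(c-j)) = (\<Prod>l<d. 1 - t^(e+1+l))"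
    by (subst prod.nat_diff_reindex[symmetric]) (intro prod.cong refl, simp add: c)
  have den: "(\<Prod>j<d. 1 - t^(j+1)) = qp t d"
    unfolding qp_def by (rule prod.reindex_bij_witness[where i="\<lambda>l. l - 1" and j="\<lambda>j. j+1"]) auto
  have f: "gb c d t * qp t d * qp t e = qp t e * (\<Prod>l<d. 1 - t^(e+1+l))"
    using gb_fact[of d c t] qp_split[of t e d] c by simp
  have "qbinom c d t = (\<Prod>l<d. 1 - t^(e+1+l)) / qp t d"
  proof -
    have nf: "(d > c) = False" using False by simp
    show ?thesis unfolding qbinom_def nf if_False prod_dividef num den ..
  qed
  also have "\<dots> = gb c d t" using f nz1 nz2 by (simp add: field_simps)
  finally show ?thesis .
qed

lemma cc_prod:
  assumes q: "(q::'a::field) \<noteq> 0" and g: "\<forall>l\<in>{1..M}. q^l \<noteq> 1" and "r \<le> M" "2*N \<le> M" "r \<le> N"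
  shows "(\<Prod>l<r. 1 - (q^2)^(N-r+1+l)) / qp q r = cc N (int r) q"
proof -
  obtain e where e: "N = e + r" using \<open>r \<le> N\<close> by (metis add.commute le_add_diff_inverse)
  have g2: "\<forall>l\<in>{1..N}. (q^2)^l \<noteq> 1" using g \<open>2*N \<le> M\<close> by (auto simp flip: power_mult)
  have nz1: "qp q r \<noteq> 0" using g \<open>r \<le> M\<close> by (intro qp_nz) auto
  have nz2: "qp (q^2) e \<noteq> 0" using g2 e by (intro qp_nz) auto
  have f: "gb N r (q^2) * (qp q r * pm q (int r)) * qp (q^2) e = qp (q^2) e * (\<Prod>l<r. 1 - (q^2)^(e+1+l))"
    using gb_fact[of r N "q^2"] qp_split[of "q^2" e r] e qp_sq[of q r] by simp
  have "N - r = e" using e by simp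
  then have "(\<Prod>l<r. 1 - (q^2)^(N-r+1+l)) / qp q r = (\<Prod>l<r. 1 - (q^2)^(e+1+l)) / qp q r" by simp
  also have "\<dots> = gb N r (q^2) * pm q (int r)" using f nz1 nz2 by (simp add: field_simps)
  finally show ?thesis by (simp add: cc_def)
qed

lemma qpoch_qq: "qpoch q q r = qp q r"
  unfolding qpoch_def qp_def
  by (rule prod.reindex_bij_witness[where i="\<lambda>l. l - 1" and j="\<lambda>j. j+1"]) auto

lemma lhs_factor:
  assumes q: "(q::'a::field) \<noteq> 0" and g: "\<forall>l\<in>{1..M}. q^l \<noteq> 1" and "r \<le> M" "2*N \<le> M"
  shows "qpoch (q powi (2*(int N - int r + 1))) (q^2) r / qpoch q q r = cc N (int r) q"
proof (cases "r \<le> N")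
  case True
  have "qpoch (q powi (2*(int N - int r + 1))) (q^2) r = (\<Prod>l<r. 1 - (q^2)^(N-r+1+l))"
    unfolding qpoch_def
  proof (intro prod.cong refl)
    fix l
    have "2*(int N - int r + 1) = int (2*(N-r+1))" using True by simp
    then have "q powi (2*(int N - int r + 1)) = (q^2)^(N-r+1)" by (metis power_int_of_nat power_mult)
    then show "1 - q powi (2*(int N - int r + 1)) * (q^2)^l = 1 - (q^2)^(N-r+1+l)"
      by (simp add: power_add)
  qed
  then show ?thesis using cc_prod[OF q g \<open>r \<le> M\<close> \<open>2*N \<le> M\<close> True] by (simp add: qpoch_qq)
next
  case False
  have "q powi (2*(int N - int r + 1)) * (q^2)^(r-N-1) = q powi (2*(int N - int r + 1)) * q powi (2*(int r - int N - 1))"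
  proof -
    have "2*(int r - int N - 1) = int (2*(r-N-1))" using False by simp
    then have "q powi (2*(int r - int N - 1)) = (q^2)^(r-N-1)" by (metis power_int_of_nat power_mult)
    then show ?thesis by simp
  qed
  also have "\<dots> = q powi 0" using powi_split[OF q, of 0 "2*(int N - int r + 1)" "2*(int r - int N - 1)"] by simp
  finally have z: "q powi (2*(int N - int r + 1)) * (q^2)^(r-N-1) = 1" by simp
  have "qpoch (q powi (2*(int N - int r + 1))) (q^2) r = 0"
    unfolding qpoch_def using False z by (intro prod_zero) (auto intro!: bexI[where x="r-N-1"])
  moreover have "cc N (int r) q = 0" using False by (intro cc_big) simp
  ultimately show ?thesis by simp
qed

lemma rhs_factor:
  assumes q: "(q::'a::field) \<noteq> 0" and g: "\<forall>l\<in>{1..M}. q^l \<noteq> 1" and "t \<le> M" "2*a \<le> M"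
  shows "(\<Prod>j\<in>{int a + 1 - int t..int a}. 1 - q powi (2*j)) / (\<Prod>j=1..t. 1 - q^j) = cc a (int t) q"
proof (cases "t \<le> a")
  case True
  have "(\<Prod>l<t. 1 - (q^2)^(a-t+1+l)) = (\<Prod>j\<in>{int a + 1 - int t..int a}. 1 - q powi (2*j))"
  proof (rule prod.reindex_bij_witness[where j="\<lambda>l. int (a-t+1+l)" and i="\<lambda>j. nat (j - (int a + 1 - int t))"])
    fix l assume "l \<in> {..<t}"
    then show "int (a-t+1+l) \<in> {int a + 1 - int t..int a}" using True by auto
    show "1 - q powi (2 * int (a-t+1+l)) = 1 - (q^2)^(a-t+1+l)"
      by (metis power_int_of_nat power_mult of_nat_mult of_nat_numeral)
  qed (use True in auto)
  then show ?thesis using cc_prod[OF q g \<open>t \<le> M\<close> \<open>2*a \<le> M\<close> True] by (simp add: qp_def del: of_nat_add)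
next
  case False
  have "(\<Prod>j\<in>{int a + 1 - int t..int a}. 1 - q powi (2*j)) = 0"
    using False by (intro prod_zero) (auto intro!: bexI[where x=0])
  moreover have "cc a (int t) q = 0" using False by (intro cc_big) simp
  ultimately show ?thesis by simp
qed

lemma sum_rev_int: "(\<Sum>t\<in>{0..int M}. f t) = (\<Sum>r\<in>{0..M}. f (int M - int r))"
  by (rule sum.reindex_bij_witness[where j="\<lambda>t. nat (int M - t)" and i="\<lambda>r. int M - int r"]) auto

theorem mainTheorem11:
  fixes q :: "'a::field" and n k i :: nat
  assumes "even n" and "1 \<le> k" and "k \<le> n div 2" and "1 \<le> i" and "i \<le> n div 2"
    and "q \<noteq> 0" and "\<forall>m\<in>{1..n}. q ^ m \<noteq> 1"
  shows "(\<Sum>j=0..k. qbinom ((n - 2*i) div 2) j (q^2)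
            * q powi (2 * (int k - int j)^2 - (int k - int j) + (int n - 1) * int j - 1)
            * qpoch (q powi (int n + 2 - 4 * int k + 2 * int j)) (q^2) (2*k - 2*j)
            / qpoch q q (2*k - 2*j))
       = q powi (2 * (int k)^2 - int k - 1) *
         (\<Sum>r=0..2*k. qbinom (n - 2*i) r q
            * q powi ((2 * int k - int r) * (int n - 2 * int i - int r))
            * (\<Prod>j\<in>{int i + int r + 1 - 2 * int k .. int i}. 1 - q powi (2 * j))
            / (\<Prod>j=1..2*k - r. 1 - q ^ j))"
proof -
  note q = \<open>q \<noteq> 0\<close>
  note g = \<open>\<forall>m\<in>{1..n}. q ^ m \<noteq> 1\<close>
  define m where "m = (n - 2*i) div 2"
  define a where "a = i"
  define K where "K = 2 * int k"
  define c0 where "c0 = q powi (2 * (int k)^2 - int k - 1)"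
  have nm: "n = 2*m + 2*a" "n - 2*i = 2*m" using \<open>even n\<close> \<open>i \<le> n div 2\<close> by (auto simp: m_def a_def elim!: evenE)
  have g2: "\<forall>l\<in>{1..c}. (q^2)^l \<noteq> 1" if "2*c \<le> n" for c
    using g that by (auto simp flip: power_mult)
  have g1: "\<forall>l\<in>{1..c}. q^l \<noteq> 1" if "c \<le> n" for c
    using g that by auto
  define \<tau> where "\<tau> = (\<lambda>j. c0 * (gb m j (q^2) * cc (m+a-j) (K - 2*int j) q * q powi (2*int j*(int m + int a + int j - K))))"
  have Lpt: "qbinom ((n - 2*i) div 2) j (q^2)
            * q powi (2 * (int k - int j)^2 - (int k - int j) + (int n - 1) * int j - 1)
            * qpoch (q powi (int n + 2 - 4 * int k + 2 * int j)) (q^2) (2*k - 2*j)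
            / qpoch q q (2*k - 2*j) = \<tau> j" if "j \<in> {0..k}" for j
  proof -
    have jk: "j \<le> k" using that by simp
    have qb: "qbinom ((n - 2*i) div 2) j (q^2) = gb m j (q^2)"
      unfolding m_def[symmetric] by (rule qbinom_gb, rule g2) (use nm in simp)
    show ?thesis
    proof (cases "j \<le> m")
      case True
      have ex: "int n + 2 - 4 * int k + 2 * int j = 2*(int (m+a-j) - int (2*k-2*j) + 1)"
        using nm jk True by simp
      have lf: "qpoch (q powi (int n + 2 - 4 * int k + 2 * int j)) (q^2) (2*k - 2*j) / qpoch q q (2*k - 2*j)
          = cc (m+a-j) (K - 2*int j) q"
        unfolding ex using lhs_factor[OF q g, of "2*k-2*j" "m+a-j"] nm jk \<open>k \<le> n div 2\<close>
        by (simp add: K_def of_nat_diff)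
      have pw: "q powi (2 * (int k - int j)^2 - (int k - int j) + (int n - 1) * int j - 1)
          = c0 * q powi (2*int j*(int m + int a + int j - K))"
        unfolding c0_def by (rule powi_split[OF q]) (simp add: K_def nm power2_eq_square algebra_simps)
      show ?thesis unfolding \<tau>_def qb pw times_divide_eq_right[symmetric] lf[symmetric]
        by (simp add: algebra_simps times_divide_eq_right)
    next
      case False
      then show ?thesis unfolding \<tau>_def qb by (simp add: gb_zero)
    qed
  qed
  have LHS: "(\<Sum>j=0..k. qbinom ((n - 2*i) div 2) j (q^2)
            * q powi (2 * (int k - int j)^2 - (int k - int j) + (int n - 1) * int j - 1)
            * qpoch (q powi (int n + 2 - 4 * int k + 2 * int j)) (q^2) (2*k - 2*j)
            / qpoch q q (2*k - 2*j)) = c0 * T a m K q"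
  proof -
    have "(\<Sum>j=0..k. qbinom ((n - 2*i) div 2) j (q^2)
            * q powi (2 * (int k - int j)^2 - (int k - int j) + (int n - 1) * int j - 1)
            * qpoch (q powi (int n + 2 - 4 * int k + 2 * int j)) (q^2) (2*k - 2*j)
            / qpoch q q (2*k - 2*j)) = (\<Sum>j=0..k. \<tau> j)"
      by (rule sum.cong[OF refl Lpt])
    also have "\<dots> = (\<Sum>j\<le>max k m. \<tau> j)"
      by (rule sum.mono_neutral_left) (auto simp: \<tau>_def K_def)
    also have "\<dots> = (\<Sum>j\<le>m. \<tau> j)"
      by (rule sum.mono_neutral_right) (auto simp: \<tau>_def gb_zero)
    also have "\<dots> = c0 * T a m K q"
      by (simp add: T_def \<tau>_def sum_distrib_left)
    finally show ?thesis .
  qed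
  have Rpt: "qbinom (n - 2*i) r q
            * q powi ((2 * int k - int r) * (int n - 2 * int i - int r))
            * (\<Prod>j\<in>{int i + int r + 1 - 2 * int k .. int i}. 1 - q powi (2 * j))
            / (\<Prod>j=1..2*k - r. 1 - q ^ j)
       = B (2*m) (K - (K - int r)) q * q powi ((K - int r)*(2*int m - K + (K - int r))) * cc a (K - int r) q"
    if "r \<in> {0..2*k}" for r
  proof -
    have rk: "r \<le> 2*k" using that by simp
    have qb: "qbinom (n - 2*i) r q = B (2*m) (K - (K - int r)) q"
      unfolding nm(2) by (simp add: qbinom_gb[OF g1] nm)
    have rng: "int i + int r + 1 - 2 * int k = int a + 1 - int (2*k - r)" using rk by (simp add: a_def)
    have rf: "(\<Prod>j\<in>{int i + int r + 1 - 2 * int k .. int i}. 1 - q powi (2 * j)) / (\<Prod>j=1..2*k - r. 1 - q ^ j)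
        = cc a (K - int r) q"
      unfolding rng using rhs_factor[OF q g, of "2*k-r" a] rk \<open>k \<le> n div 2\<close> nm
      by (simp add: K_def of_nat_diff a_def)
    have ex: "(2 * int k - int r) * (int n - 2 * int i - int r) = (K - int r)*(2*int m - K + (K - int r))"
      using nm by (simp add: K_def a_def algebra_simps)
    show ?thesis unfolding qb ex times_divide_eq_right[symmetric] rf[symmetric] by simp
  qed
  have RHS: "(\<Sum>r=0..2*k. qbinom (n - 2*i) r q
            * q powi ((2 * int k - int r) * (int n - 2 * int i - int r))
            * (\<Prod>j\<in>{int i + int r + 1 - 2 * int k .. int i}. 1 - q powi (2 * j))
            / (\<Prod>j=1..2*k - r. 1 - q ^ j)) = S a m K q"
  proof -
    have "K = int (2*k)" by (simp add: K_def)
    then have e: "S a m K q = (\<Sum>r\<in>{0..2*k}. B (2*m) (K - (K - int r)) q * q powi ((K - int r)*(2*int m - K + (K - int r))) * cc a (K - int r) q)"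
      unfolding S_def by (simp only: sum_rev_int)
    show ?thesis unfolding e by (rule sum.cong[OF refl Rpt])
  qed
  show ?thesis unfolding LHS RHS c0_def[symmetric] using ST[OF q] by simp
qed

end
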